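(* (1) If $k\ge1$ is odd, then $\omega\phi_k=\phi_k\omega$ and $\omega\psi^k=\psi^k\omega$ as operators on $\Lambda$. (2) If $1\le k<\ell$ are integers, then $\phi_{2^\ell}\,\omega\,\psi^{2^k}=\phi_{2^k}\,\omega\,\psi^{2^k}\,\phi_{2^{\ell-k}}$ as operators on $\Lambda$. (3) For any integer $\ell>0$ and any composition $\mu$ with $2^\ell$ dividing $|\mu|=\sum_i\mu_i$, we have $\phi_{2^\ell}\,\omega(h_\mu)=(-1)^{|\mu|/2^\ell}\,\omega\,\phi_{2^\ell}(h_\mu)$.
   Context: $\Lambda$ is the ring of symmetric functions over $\mathbb{C}(q)$ with the Hall inner product (Schur functions orthonormal). $\omega:\Lambda\to\Lambda$ is the ring involution with $\omega(e_n)=h_n$ (equivalently $\omega(p_n)=(-1)^{n-1}p_n$). For $k\ge1$, $\psi^k(F)(x_1,x_2,\dots)=F(x_1^k,x_2^k,\dots)$ and $\phi_k$ is the adjoint of $\psi^k$ for the Hall inner product. $h_\mu=\prod_i h_{\mu_i}$ is the complete homogeneous symmetric function of the composition $\mu$. *)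

theory Defs
  imports "HOL-Library.Poly_Mapping" "HOL-Library.Multiset"
          "HOL-Computational_Algebra.Polynomial" "HOL-Computational_Algebra.Fraction_Field"
begin

(* Ring of symmetric functions over C(q), presented (char 0) as the polynomial
   ring C(q)[p_1,p_2,...] in the power sums: an element is a finitely supported
   family of coefficients in the basis p_lambda, lambda a partition
   (finite multiset of positive integers). *)

typedef pnat = "{n::nat. 0 < n}" morphisms nat_of_pnat Abs_pnat by auto

type_synonym K = "complex poly fract"
type_synonym partition = "pnat multiset"
type_synonym sym = "partition \<Rightarrow>\<^sub>0 K"

(* power sum p_lambda; p_lambda * p_mu = p_(lambda+mu) by the convolution product *)
definition psum :: "partition \<Rightarrow> sym" where
  "psum lam = Poly_Mapping.single lam 1"

definition pn :: "nat \<Rightarrow> sym" where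
  "pn n = (if n = 0 then 1 else psum {#Abs_pnat n#})"

definition wt :: "partition \<Rightarrow> nat" where
  "wt lam = sum_mset (image_mset nat_of_pnat lam)"

definition zee :: "partition \<Rightarrow> nat" where
  "zee lam = (\<Prod>i\<in>set_mset lam. nat_of_pnat i ^ count lam i * fact (count lam i))"

definition hall :: "sym \<Rightarrow> sym \<Rightarrow> K" where
  "hall f g = (\<Sum>lam\<in>Poly_Mapping.keys f. Poly_Mapping.lookup f lam * Poly_Mapping.lookup g lam * of_nat (zee lam))"

definition alg_subst :: "(pnat \<Rightarrow> sym) \<Rightarrow> sym \<Rightarrow> sym" where
  "alg_subst g f = (\<Sum>lam\<in>Poly_Mapping.keys f. Poly_Mapping.single 0 (Poly_Mapping.lookup f lam) * prod_mset (image_mset g lam))"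

definition omega :: "sym \<Rightarrow> sym" where
  "omega = alg_subst (\<lambda>i. (-1) ^ (nat_of_pnat i - 1) * psum {#i#})"

(* psi^k(F)(x_1,x_2,...) = F(x_1^k,x_2^k,...): the algebra map p_n \<mapsto> p_(kn) *)
definition psi :: "nat \<Rightarrow> sym \<Rightarrow> sym" where
  "psi k = alg_subst (\<lambda>i. pn (k * nat_of_pnat i))"

definition phi :: "nat \<Rightarrow> sym \<Rightarrow> sym" where
  "phi k = (THE \<phi>. \<forall>f g. hall (psi k f) g = hall f (\<phi> g))"

definition hn :: "nat \<Rightarrow> sym" where
  "hn n = (\<Sum>lam\<in>{lam. wt lam = n}. Poly_Mapping.single lam (1 / of_nat (zee lam)))"

definition hcomp :: "nat list \<Rightarrow> sym" where
  "hcomp mu = prod_list (map hn mu)"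

end

theory Submission
  imports Defs
begin

lemma ofnat_K_nz: "0 < n \<Longrightarrow> (of_nat n :: K) \<noteq> 0"
  by (simp add: of_nat_fract Zero_fract_def eq_fract)

lemma lookup_scal: "Poly_Mapping.lookup (Poly_Mapping.single 0 c * (X::sym)) lam = c * Poly_Mapping.lookup X lam"
  by (simp flip: mult_map_scale_conv_mult add: Poly_Mapping.map.rep_eq when_def)

lemma neg1_sym: "(-1::sym)^m = Poly_Mapping.single 0 ((-1)^m)"
  by (induct m) (simp_all add: mult_single single_uminus)

lemma neg1_par: "(-1::'a::ring_1)^m = (if even m then 1 else -1)"
  by (induct m) auto

definition mp :: "nat \<Rightarrow> pnat \<Rightarrow> pnat" where "mp k i = Abs_pnat (k * nat_of_pnat i)"
definition mulp :: "nat \<Rightarrow> partition \<Rightarrow> partition" where "mulp k lam = image_mset (mp k) lam"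
definition sgnp :: "partition \<Rightarrow> K" where "sgnp lam = (-1)^(wt lam - size lam)"

lemma pos: "0 < nat_of_pnat i" using nat_of_pnat[of i] by auto

lemma nat_mp: "0<k \<Longrightarrow> nat_of_pnat (mp k i) = k * nat_of_pnat i"
  unfolding mp_def using pos[of i] by (simp add: Abs_pnat_inverse)

lemma inj_mp: "0<k \<Longrightarrow> inj (mp k)"
  unfolding inj_def by (metis nat_mp mult_left_cancel not_gr0 nat_of_pnat_inject)

lemma inj_mulp: "0<k \<Longrightarrow> inj (mulp k)"
  using multiset.inj_map[OF inj_mp] by (simp add: mulp_def[abs_def])

lemma mulp_mulp: "0<a \<Longrightarrow> 0<b \<Longrightarrow> mulp a (mulp b lam) = mulp (a*b) lam"
  unfolding mulp_def by (auto simp: multiset.map_comp intro!: image_mset_cong nat_of_pnat_inject[THEN iffD1] simp: nat_mp)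

lemma size_mulp[simp]: "size (mulp k lam) = size lam" by (simp add: mulp_def)

lemma wt_add: "wt (a+b) = wt a + wt b" by (simp add: wt_def)
lemma wt_empty[simp]: "wt {#} = 0" by (simp add: wt_def)

lemma wt_mulp: "0<k \<Longrightarrow> wt (mulp k lam) = k * wt lam"
  unfolding wt_def mulp_def by (induct lam) (auto simp: nat_mp algebra_simps)

lemma size_le_wt: "size lam \<le> wt lam"
  unfolding wt_def by (induct lam) (auto simp: add_mono Suc_le_eq[symmetric] intro: le_trans[OF _ add_mono[OF Suc_leI[OF pos]]])

lemma sgnp_par: "sgnp lam = (if even (wt lam + size lam) then 1 else -1)"
  using size_le_wt[of lam] unfolding sgnp_def neg1_par by (auto simp: even_diff_nat)

lemma sgnp_odd: "odd k \<Longrightarrow> sgnp (mulp k lam) = sgnp lam"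
  using odd_pos[of k] by (simp add: sgnp_par wt_mulp)

lemma sgnp_even: "even k \<Longrightarrow> 0 < k \<Longrightarrow> sgnp (mulp k lam) = (-1)^(size lam)"
  by (simp add: sgnp_par wt_mulp neg1_par)

lemma psum_mult: "psum a * psum b = psum (a + b)"
  by (simp add: psum_def mult_single)

lemma neg1_psum: "(-1::sym)^m * psum a = Poly_Mapping.single a ((-1)^m)"
  by (simp add: neg1_sym psum_def mult_single)

lemma omega_prod: "prod_mset (image_mset (\<lambda>i. (-1) ^ (nat_of_pnat i - 1) * psum {#i#}) lam)
   = Poly_Mapping.single lam (sgnp lam)"
proof (induct lam)
  case empty then show ?case by (simp add: sgnp_def)
next
  case (add x lam)
  have e: "nat_of_pnat x + wt lam - Suc (size lam) = (nat_of_pnat x - 1) + (wt lam - size lam)"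
    using pos[of x] size_le_wt[of lam] by arith
  have w: "wt (add_mset x lam) = nat_of_pnat x + wt lam" by (simp add: wt_def)
  have s: "sgnp (add_mset x lam) = (-1) ^ (nat_of_pnat x - 1) * sgnp lam"
    unfolding sgnp_def w size_add_mset e power_add ..
  have xl: "{#x#} + lam = add_mset x lam" by simp
  have "prod_mset (image_mset (\<lambda>i. (-1) ^ (nat_of_pnat i - 1) * psum {#i#}) (add_mset x lam))
     = ((-1) ^ (nat_of_pnat x - 1) * psum {#x#}) * Poly_Mapping.single lam (sgnp lam)"
    by (simp only: image_mset_add_mset prod_mset.add_mset add)
  also have "\<dots> = Poly_Mapping.single (add_mset x lam) (sgnp (add_mset x lam))"
    by (simp only: neg1_psum mult_single s xl)
  finally show ?case .
qed

lemma lookup_sum_single: "finite A \<Longrightarrow> inj_on s A \<Longrightarrow> a \<in> A \<Longrightarrow>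
   Poly_Mapping.lookup (\<Sum>lam\<in>A. Poly_Mapping.single (s lam) (c lam)) (s a) = c a"
  by (simp add: lookup_sum lookup_single when_def inj_on_eq_iff cong: if_cong)

lemma lookup_sum_single0: "(\<And>lam. lam \<in> A \<Longrightarrow> s lam \<noteq> nu) \<Longrightarrow>
   Poly_Mapping.lookup (\<Sum>lam\<in>A. Poly_Mapping.single (s lam) (c lam)) nu = 0"
  by (simp add: lookup_sum lookup_single when_def)

lemma omega_sum: "omega f = (\<Sum>lam\<in>Poly_Mapping.keys f. Poly_Mapping.single lam (Poly_Mapping.lookup f lam * sgnp lam))"
  unfolding omega_def alg_subst_def omega_prod by (simp add: mult_single)

lemma lookup_omega: "Poly_Mapping.lookup (omega f) nu = Poly_Mapping.lookup f nu * sgnp nu"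
proof (cases "nu \<in> Poly_Mapping.keys f")
  case True then show ?thesis
    unfolding omega_sum using lookup_sum_single[of "Poly_Mapping.keys f" "\<lambda>x. x" nu "\<lambda>lam. Poly_Mapping.lookup f lam * sgnp lam"] by simp
next
  case False then show ?thesis
    unfolding omega_sum using lookup_sum_single0[of "Poly_Mapping.keys f" "\<lambda>x. x" nu "\<lambda>lam. Poly_Mapping.lookup f lam * sgnp lam"]
    by (auto simp: in_keys_iff)
qed

lemma psi_prod: "0 < k \<Longrightarrow> prod_mset (image_mset (\<lambda>i. pn (k * nat_of_pnat i)) lam) = psum (mulp k lam)"
proof (induct lam)
  case empty then show ?case by (simp add: psum_def mulp_def)
next
  case (add x lam)
  have p: "pn (k * nat_of_pnat x) = psum {#mp k x#}" using add pos[of x] by (simp add: pn_def mp_def)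
  have m: "mulp k (add_mset x lam) = {#mp k x#} + mulp k lam" by (simp add: mulp_def)
  show ?case using add by (simp only: m p image_mset_add_mset prod_mset.add_mset psum_mult)
qed

lemma psi_sum: "0 < k \<Longrightarrow> psi k f = (\<Sum>lam\<in>Poly_Mapping.keys f. Poly_Mapping.single (mulp k lam) (Poly_Mapping.lookup f lam))"
  unfolding psi_def alg_subst_def by (simp add: psi_prod psum_def mult_single)

lemma lookup_psi: "0 < k \<Longrightarrow> Poly_Mapping.lookup (psi k f) (mulp k lam) = Poly_Mapping.lookup f lam"
proof (cases "lam \<in> Poly_Mapping.keys f")
  case True assume k: "0<k"
  then show ?thesis using True
    unfolding psi_sum[OF k] using lookup_sum_single[of "Poly_Mapping.keys f" "mulp k" lam "Poly_Mapping.lookup f"] inj_mulp[OF k]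
    by (simp add: inj_on_subset)
next
  case False assume k: "0<k"
  then show ?thesis using False
    unfolding psi_sum[OF k] using lookup_sum_single0[of "Poly_Mapping.keys f" "mulp k" "mulp k lam" "Poly_Mapping.lookup f"] inj_mulp[OF k]
    by (auto simp: in_keys_iff inj_eq)
qed

lemma lookup_psi0: "0 < k \<Longrightarrow> nu \<notin> range (mulp k) \<Longrightarrow> Poly_Mapping.lookup (psi k f) nu = 0"
  unfolding psi_sum by (rule lookup_sum_single0) auto

lemma keys_psi: "0 < k \<Longrightarrow> Poly_Mapping.keys (psi k f) = mulp k ` Poly_Mapping.keys f"
proof -
  assume k: "0<k"
  have "x \<in> mulp k ` Poly_Mapping.keys f" if "Poly_Mapping.lookup (psi k f) x \<noteq> 0" for x
  proof -
    from that lookup_psi0[OF k, of x f] obtain lam where "x = mulp k lam" by auto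
    then show ?thesis using that k by (auto simp: lookup_psi in_keys_iff)
  qed
  then show ?thesis using k by (auto simp: in_keys_iff lookup_psi)
qed

lemma count_image_inj: "inj f \<Longrightarrow> count (image_mset f M) (f x) = count M x"
proof -
  assume "inj f"
  then have "f -` {f x} = {x}" by (auto simp: inj_eq)
  then show ?thesis by (cases "x \<in># M") (auto simp: count_image_mset count_eq_zero_iff)
qed

lemma zee_pos: "0 < zee lam"
  unfolding zee_def using pos by (auto intro!: prod_pos)

lemma zee_mulp: "0 < k \<Longrightarrow> zee (mulp k lam) = k ^ size lam * zee lam"
proof -
  assume k: "0<k"
  have "zee (mulp k lam) = (\<Prod>i\<in>set_mset lam. (k * nat_of_pnat i) ^ count lam i * fact (count lam i))"
    unfolding zee_def mulp_def using k
    by (simp add: prod.reindex inj_mp count_image_inj nat_mp inj_on_subset[OF inj_mp[OF k]])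
  also have "\<dots> = (\<Prod>i\<in>set_mset lam. k ^ count lam i) * zee lam"
    unfolding zee_def by (simp add: power_mult_distrib prod.distrib mult.assoc)
  also have "(\<Prod>i\<in>set_mset lam. k ^ count lam i) = k ^ size lam"
    by (simp add: power_sum[symmetric] size_multiset_overloaded_eq)
  finally show ?thesis .
qed

definition Phi :: "nat \<Rightarrow> sym \<Rightarrow> sym" where
  "Phi k g = Abs_poly_mapping (\<lambda>lam. of_nat k ^ size lam * Poly_Mapping.lookup g (mulp k lam))"

lemma lookup_Phi: "0 < k \<Longrightarrow> Poly_Mapping.lookup (Phi k g) lam = of_nat k ^ size lam * Poly_Mapping.lookup g (mulp k lam)"
proof -
  assume k: "0<k"
  have "{lam. of_nat k ^ size lam * Poly_Mapping.lookup g (mulp k lam) \<noteq> 0} \<subseteq> mulp k -` {nu. Poly_Mapping.lookup g nu \<noteq> 0}"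
    by auto
  moreover have "finite (mulp k -` {nu. Poly_Mapping.lookup g nu \<noteq> 0})"
    using inj_mulp[OF k] by (intro finite_vimageI) auto
  ultimately show ?thesis unfolding Phi_def by (subst lookup_Abs_poly_mapping) (auto intro: finite_subset)
qed

lemma hall_single: "hall (Poly_Mapping.single lam 1) h = Poly_Mapping.lookup h lam * of_nat (zee lam)"
  by (simp add: hall_def)

lemma hall_psi: "0 < k \<Longrightarrow> hall (psi k f) g = hall f (Phi k g)"
proof -
  assume k: "0<k"
  have "hall (psi k f) g = (\<Sum>lam\<in>Poly_Mapping.keys f. Poly_Mapping.lookup f lam * Poly_Mapping.lookup g (mulp k lam) * of_nat (zee (mulp k lam)))"
    unfolding hall_def keys_psi[OF k] using k
    by (simp add: sum.reindex inj_on_subset[OF inj_mulp[OF k]] lookup_psi)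
  also have "\<dots> = hall f (Phi k g)"
    unfolding hall_def using k by (simp add: lookup_Phi zee_mulp mult_ac)
  finally show ?thesis .
qed

lemma phi_eq: "0 < k \<Longrightarrow> phi k = Phi k"
proof -
  assume k: "0<k"
  show ?thesis unfolding phi_def
  proof (rule the_equality)
    show "\<forall>f g. hall (psi k f) g = hall f (Phi k g)" using hall_psi[OF k] by blast
  next
    fix \<phi> assume H: "\<forall>f g. hall (psi k f) g = hall f (\<phi> g)"
    show "\<phi> = Phi k"
    proof (rule ext, rule poly_mapping_eqI)
      fix g lam
      have "hall (Poly_Mapping.single lam 1) (\<phi> g) = hall (Poly_Mapping.single lam 1) (Phi k g)"
        using H hall_psi[OF k] by metis
      then show "Poly_Mapping.lookup (\<phi> g) lam = Poly_Mapping.lookup (Phi k g) lam"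
        using ofnat_K_nz[OF zee_pos[of lam]] by (simp add: hall_single)
    qed
  qed
qed

lemma lookup_phi: "0 < k \<Longrightarrow> Poly_Mapping.lookup (phi k g) lam = of_nat k ^ size lam * Poly_Mapping.lookup g (mulp k lam)"
  by (simp add: phi_eq lookup_Phi)

lemma keys_hn: "Poly_Mapping.keys (hn n) \<subseteq> {lam. wt lam = n}"
  unfolding hn_def using keys_sum[of "\<lambda>lam. Poly_Mapping.single lam (1 / of_nat (zee lam))" "{lam. wt lam = n}"]
  by (auto split: if_splits)

lemma keys_hcomp: "Poly_Mapping.keys (hcomp mu) \<subseteq> {lam. wt lam = sum_list mu}"
proof (induct mu)
  case Nil then show ?case by (simp add: hcomp_def)
next
  case (Cons a mu)
  have h: "hcomp (a # mu) = hn a * hcomp mu" by (simp add: hcomp_def)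
  show ?case
  proof
    fix x assume "x \<in> Poly_Mapping.keys (hcomp (a # mu))"
    then obtain b c where "x = b + c" "b \<in> Poly_Mapping.keys (hn a)" "c \<in> Poly_Mapping.keys (hcomp mu)"
      using keys_mult[of "hn a" "hcomp mu"] h by auto
    then show "x \<in> {lam. wt lam = sum_list (a # mu)}" using keys_hn[of a] Cons by (auto simp: wt_add dest!: subsetD)
  qed
qed

lemma part1a: assumes "odd k" shows "omega \<circ> phi k = phi k \<circ> omega"
proof (rule ext, rule poly_mapping_eqI)
  fix g lam
  have k: "0<k" using assms odd_pos by blast
  show "Poly_Mapping.lookup ((omega \<circ> phi k) g) lam = Poly_Mapping.lookup ((phi k \<circ> omega) g) lam"
    using k by (simp add: lookup_omega lookup_phi sgnp_odd[OF assms])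
qed

lemma part1b: assumes "odd k" shows "omega \<circ> psi k = psi k \<circ> omega"
proof (rule ext, rule poly_mapping_eqI)
  fix f nu
  have k: "0<k" using assms odd_pos by blast
  show "Poly_Mapping.lookup ((omega \<circ> psi k) f) nu = Poly_Mapping.lookup ((psi k \<circ> omega) f) nu"
  proof (cases "nu \<in> range (mulp k)")
    case True then obtain lam where nu: "nu = mulp k lam" by auto
    show ?thesis using k by (simp add: nu lookup_omega lookup_psi sgnp_odd[OF assms])
  next
    case False show ?thesis using k False by (simp add: lookup_omega lookup_psi0)
  qed
qed

lemma part2: assumes "1 \<le> k" "k < l"
  shows "phi (2^l) \<circ> omega \<circ> psi (2^k) = phi (2^k) \<circ> omega \<circ> psi (2^k) \<circ> phi (2^(l-k))"
proof (rule ext, rule poly_mapping_eqI)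
  fix f lam
  have e: "(2::nat)^l = 2^k * 2^(l-k)" using assms by (simp add: power_add[symmetric])
  have eK: "(2::K)^l = 2^k * 2^(l-k)" using assms by (simp add: power_add[symmetric])
  have m: "mulp (2^l) lam = mulp (2^k) (mulp (2^(l-k)) lam)" by (simp add: mulp_mulp e)
  have s1: "sgnp (mulp (2^l) lam) = (-1)^(size lam)" using assms by (simp add: sgnp_even)
  have s2: "sgnp (mulp (2^k) lam) = (-1)^(size lam)" using assms by (simp add: sgnp_even)
  have "Poly_Mapping.lookup ((phi (2^l) \<circ> omega \<circ> psi (2^k)) f) lam
      = (2^l) ^ size lam * (Poly_Mapping.lookup f (mulp (2^(l-k)) lam) * (-1)^(size lam))"
    by (simp add: lookup_phi lookup_omega s1) (simp add: m lookup_psi)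
  also have "\<dots> = Poly_Mapping.lookup ((phi (2^k) \<circ> omega \<circ> psi (2^k) \<circ> phi (2^(l-k))) f) lam"
    by (simp add: lookup_phi lookup_omega lookup_psi s2 eK power_mult_distrib mult_ac)
  finally show "Poly_Mapping.lookup ((phi (2^l) \<circ> omega \<circ> psi (2^k)) f) lam
      = Poly_Mapping.lookup ((phi (2^k) \<circ> omega \<circ> psi (2^k) \<circ> phi (2^(l-k))) f) lam" .
qed

lemma part3: assumes "0 < l" "2^l dvd sum_list mu"
  shows "phi (2^l) (omega (hcomp mu)) = (-1) ^ (sum_list mu div 2^l) * omega (phi (2^l) (hcomp mu))"
proof (rule poly_mapping_eqI)
  fix lam
  let ?h = "Poly_Mapping.lookup (hcomp mu) (mulp (2^l) lam)"
  show "Poly_Mapping.lookup (phi (2^l) (omega (hcomp mu))) lam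
      = Poly_Mapping.lookup ((-1) ^ (sum_list mu div 2^l) * omega (phi (2^l) (hcomp mu))) lam"
  proof (cases "?h = 0")
    case True then show ?thesis by (simp add: neg1_sym lookup_scal lookup_omega lookup_phi)
  next
    case False
    then have "wt (mulp (2^l) lam) = sum_list mu" using keys_hcomp[of mu] by (auto simp: in_keys_iff)
    then have "2^l * wt lam = sum_list mu" by (simp add: wt_mulp)
    then have w: "wt lam = sum_list mu div 2^l" by (metis nonzero_mult_div_cancel_left power_not_zero zero_neq_numeral)
    have "sgnp (mulp (2^l) lam) = (-1)^(sum_list mu div 2^l) * sgnp lam"
      using assms by (simp add: sgnp_even) (auto simp: sgnp_par w[symmetric] neg1_par)
    then show ?thesis unfolding neg1_sym lookup_scal by (simp add: lookup_omega lookup_phi mult_ac)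
  qed
qed

theorem lemma2p3:
  shows "(\<forall>k::nat. odd k \<longrightarrow>
            omega \<circ> phi k = phi k \<circ> omega \<and> omega \<circ> psi k = psi k \<circ> omega)
       \<and> (\<forall>k l :: nat. 1 \<le> k \<and> k < l \<longrightarrow>
            phi (2^l) \<circ> omega \<circ> psi (2^k)
              = phi (2^k) \<circ> omega \<circ> psi (2^k) \<circ> phi (2^(l-k)))
       \<and> (\<forall>(l::nat) (mu::nat list). 0 < l \<and> (\<forall>i\<in>set mu. 0 < i) \<and> 2^l dvd sum_list mu \<longrightarrow>
            phi (2^l) (omega (hcomp mu))
              = (-1) ^ (sum_list mu div 2^l) * omega (phi (2^l) (hcomp mu)))"
  using part1a part1b part2 part3 by blast

end
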